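(* Let $R$ be a Bézout domain and let $A,B,C\in R^{n\times n}$ satisfy $ABA=ACA$. If $AB$ and $CA$ are group invertible, then $AB$ is similar to $CA$.
   Context: A Bézout domain is an integral domain in which every finitely generated ideal is principal. $R^{n\times n}$ is the ring of $n\times n$ matrices over $R$. A matrix $M\in R^{n\times n}$ is group invertible if there exists $X\in R^{n\times n}$ with $MX=XM$, $XMX=X$, $MXM=M$; such $X$ is unique and denoted $M^{\#}$. Two matrices $M,N\in R^{n\times n}$ are similar if $M=S^{-1}NS$ for some invertible $S\in R^{n\times n}$. *)

theory Defs
  imports "Jordan_Normal_Form.Matrix"
begin

definition gen_ideal :: "'a::comm_ring_1 set \<Rightarrow> 'a set" where
  "gen_ideal S = {\<Sum>s\<in>S. c s * s | c. True}"

definition bezout_domain :: "'a::idom itself \<Rightarrow> bool" where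
  "bezout_domain _ \<longleftrightarrow>
     (\<forall>S::'a set. finite S \<longrightarrow> (\<exists>d. gen_ideal S = {r * d | r. True}))"

definition group_invertible :: "nat \<Rightarrow> 'a::comm_ring_1 mat \<Rightarrow> bool" where
  "group_invertible n M \<longleftrightarrow>
     (\<exists>X \<in> carrier_mat n n. M * X = X * M \<and> X * M * X = X \<and> M * X * M = M)"

end

theory Submission
  imports Defs "Jordan_Normal_Form.Determinant"
begin

lemma rank_le:
  fixes Z X :: "'a::comm_ring_1 mat"
  assumes Z: "Z \<in> carrier_mat k n" and X: "X \<in> carrier_mat n k" and ZX: "Z * X = 1\<^sub>m k"
  shows "k \<le> n"
proof (rule ccontr)
  assume "\<not> k \<le> n" hence nk: "n < k" by simp
  define X0 where "X0 = mat k k (\<lambda>(i,j). if i < n then X$$(i,j) else 0)"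
  define Z0 where "Z0 = mat k k (\<lambda>(i,j). if j < n then Z$$(i,j) else 0)"
  have X0c: "X0 \<in> carrier_mat k k" and Z0c: "Z0 \<in> carrier_mat k k" by (auto simp: X0_def Z0_def)
  have "Z0 * X0 = Z * X"
  proof (rule eq_matI)
    fix i j assume ij: "i < dim_row (Z * X)" "j < dim_col (Z * X)"
    hence i: "i < k" and j: "j < k" using Z X by auto
    have "(Z0 * X0) $$ (i,j) = (\<Sum>l\<in>{0..<k}. Z0 $$ (i,l) * X0 $$ (l,j))"
      using X0c Z0c i j by (simp add: scalar_prod_def)
    also have "\<dots> = (\<Sum>l\<in>{0..<n}. Z0 $$ (i,l) * X0 $$ (l,j))"
      by (rule sum.mono_neutral_right) (use nk i j in \<open>auto simp: X0_def\<close>)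
    also have "\<dots> = (\<Sum>l\<in>{0..<n}. Z $$ (i,l) * X $$ (l,j))"
      by (rule sum.cong) (use nk i j in \<open>auto simp: X0_def Z0_def\<close>)
    also have "\<dots> = (Z * X) $$ (i,j)" using Z X i j by (simp add: scalar_prod_def)
    finally show "(Z0 * X0) $$ (i,j) = (Z * X) $$ (i,j)" .
  qed (use Z X in \<open>auto simp: X0_def Z0_def\<close>)
  have "multrow n 0 X0 = X0" by (rule eq_matI) (auto simp: X0_def)
  hence "det X0 = 0" using det_multrow[OF nk X0c, of 0] by simp
  hence "det (Z0 * X0) = 0" using det_mult[OF Z0c X0c] by simp
  thus False using \<open>Z0 * X0 = Z * X\<close> ZX by simp
qed

definition colcat :: "'a::zero mat \<Rightarrow> 'a mat \<Rightarrow> 'a mat" where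
  "colcat X Y = mat (dim_row X) (dim_col X + dim_col Y)
     (\<lambda>(i,j). if j < dim_col X then X$$(i,j) else Y$$(i,j - dim_col X))"
definition rowcat :: "'a::zero mat \<Rightarrow> 'a mat \<Rightarrow> 'a mat" where
  "rowcat Z W = mat (dim_row Z + dim_row W) (dim_col Z)
     (\<lambda>(i,j). if i < dim_row Z then Z$$(i,j) else W$$(i - dim_row Z, j))"

lemma dim_colcat[simp]: "dim_row (colcat X Y) = dim_row X" "dim_col (colcat X Y) = dim_col X + dim_col Y"
  by (auto simp: colcat_def)
lemma dim_rowcat[simp]: "dim_row (rowcat Z W) = dim_row Z + dim_row W" "dim_col (rowcat Z W) = dim_col Z"
  by (auto simp: rowcat_def)

lemma colcat_carrier[simp]: "X \<in> carrier_mat n a \<Longrightarrow> Y \<in> carrier_mat n b \<Longrightarrow> colcat X Y \<in> carrier_mat n (a+b)"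
  by (auto simp: colcat_def)
lemma rowcat_carrier[simp]: "Z \<in> carrier_mat a n \<Longrightarrow> W \<in> carrier_mat b n \<Longrightarrow> rowcat Z W \<in> carrier_mat (a+b) n"
  by (auto simp: rowcat_def)

lemma mult_colcat:
  fixes M X Y :: "'a::comm_ring_1 mat"
  assumes "M \<in> carrier_mat m n" "X \<in> carrier_mat n a" "Y \<in> carrier_mat n b"
  shows "M * colcat X Y = colcat (M * X) (M * Y)"
  by (rule eq_matI) (use assms in \<open>auto simp: colcat_def scalar_prod_def col_def\<close>)

lemma rowcat_mult:
  fixes M Z W :: "'a::comm_ring_1 mat"
  assumes "M \<in> carrier_mat n m" "Z \<in> carrier_mat a n" "W \<in> carrier_mat b n"
  shows "rowcat Z W * M = rowcat (Z * M) (W * M)"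
  by (rule eq_matI) (use assms in \<open>auto simp: rowcat_def scalar_prod_def row_def\<close>)

lemma colcat_rowcat:
  fixes X Y Z W :: "'a::comm_ring_1 mat"
  assumes X: "X \<in> carrier_mat n a" and Y: "Y \<in> carrier_mat n b" and Z: "Z \<in> carrier_mat a m" and W: "W \<in> carrier_mat b m"
  shows "colcat X Y * rowcat Z W = X * Z + Y * W"
proof (rule eq_matI)
  fix i j assume "i < dim_row (X * Z + Y * W)" "j < dim_col (X * Z + Y * W)"
  hence i: "i < n" and j: "j < m" using assms by auto
  have "(colcat X Y * rowcat Z W) $$ (i,j) = (\<Sum>l\<in>{0..<a+b}. colcat X Y $$ (i,l) * rowcat Z W $$ (l,j))"
    using assms i j by (simp add: scalar_prod_def)
  also have "\<dots> = (\<Sum>l\<in>{0..<a}. colcat X Y $$ (i,l) * rowcat Z W $$ (l,j)) + (\<Sum>l\<in>{a..<a+b}. colcat X Y $$ (i,l) * rowcat Z W $$ (l,j))"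
    by (rule sum.atLeastLessThan_concat[symmetric]) auto
  also have "(\<Sum>l\<in>{0..<a}. colcat X Y $$ (i,l) * rowcat Z W $$ (l,j)) = (\<Sum>l\<in>{0..<a}. X $$ (i,l) * Z $$ (l,j))"
    by (rule sum.cong) (use assms i j in \<open>auto simp: colcat_def rowcat_def\<close>)
  also have "(\<Sum>l\<in>{a..<a+b}. colcat X Y $$ (i,l) * rowcat Z W $$ (l,j)) = (\<Sum>l\<in>{0..<b}. colcat X Y $$ (i,l+a) * rowcat Z W $$ (l+a,j))"
    using sum.shift_bounds_nat_ivl[of "\<lambda>l. colcat X Y $$ (i,l) * rowcat Z W $$ (l,j)" 0 a b] by (simp add: add.commute)
  also have "\<dots> = (\<Sum>l\<in>{0..<b}. Y $$ (i,l) * W $$ (l,j))"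
    by (rule sum.cong) (use assms i j in \<open>auto simp: colcat_def rowcat_def\<close>)
  finally show "(colcat X Y * rowcat Z W) $$ (i,j) = (X * Z + Y * W) $$ (i,j)"
    using assms i j by (simp add: scalar_prod_def)
qed (use assms in auto)

lemma rowcat_colcat_one:
  fixes X Y Z W :: "'a::comm_ring_1 mat"
  assumes X: "X \<in> carrier_mat n a" and Y: "Y \<in> carrier_mat n b" and Z: "Z \<in> carrier_mat a n" and W: "W \<in> carrier_mat b n"
    and "Z * X = 1\<^sub>m a" "Z * Y = 0\<^sub>m a b" "W * X = 0\<^sub>m b a" "W * Y = 1\<^sub>m b"
  shows "rowcat Z W * colcat X Y = 1\<^sub>m (a+b)"
proof (rule eq_matI)
  fix i j assume "i < dim_row (1\<^sub>m (a+b))" "j < dim_col (1\<^sub>m (a+b))"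
  hence i: "i < a+b" and j: "j < a+b" by auto
  have e: "(rowcat Z W * colcat X Y) $$ (i,j) = (if i < a then (if j < a then (Z*X)$$(i,j) else (Z*Y)$$(i,j-a))
     else (if j < a then (W*X)$$(i-a,j) else (W*Y)$$(i-a,j-a)))"
    using X Y Z W i j by (auto simp: rowcat_def colcat_def scalar_prod_def row_def col_def)
  show "(rowcat Z W * colcat X Y) $$ (i,j) = 1\<^sub>m (a+b) $$ (i,j)"
    unfolding e using assms i j by auto
qed (use assms in auto)

lemma gen_ideal_pair:
  fixes a b g :: "'a::comm_ring_1"
  assumes "g \<in> gen_ideal {a, b}"
  shows "\<exists>\<alpha> \<beta>. g = \<alpha> * a + \<beta> * b"
proof -
  from assms obtain c where g: "g = (\<Sum>s\<in>{a,b}. c s * s)" by (auto simp: gen_ideal_def)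
  show ?thesis
  proof (cases "a = b")
    case True thus ?thesis using g by (intro exI[of _ "c a"] exI[of _ 0]) simp
  next
    case False thus ?thesis using g by (intro exI[of _ "c a"] exI[of _ "c b"]) simp
  qed
qed

lemma gen_ideal_mem:
  fixes x :: "'a::comm_ring_1"
  assumes "finite S" "x \<in> S"
  shows "x \<in> gen_ideal S"
proof -
  have "(\<Sum>s\<in>S. (if s = x then 1 else 0) * s) = (\<Sum>s\<in>S. if s = x then s else 0)"
    by (rule sum.cong) auto
  also have "\<dots> = x" using assms by (simp add: sum.delta')
  finally have "(\<Sum>s\<in>S. (if s = x then 1 else 0) * s) = x" .
  thus ?thesis unfolding gen_ideal_def by (intro CollectI exI[of _ "\<lambda>s. if s = x then 1 else 0"]) simp
qed

lemma bezout_comb: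
  fixes f :: "'b \<Rightarrow> 'a::idom"
  assumes bez: "bezout_domain TYPE('a)" and fin: "finite I"
  shows "\<exists>d c. d = (\<Sum>i\<in>I. c i * f i) \<and> (\<forall>i\<in>I. d dvd f i)"
  using fin
proof (induction I rule: finite_induct)
  case empty
  show ?case by (intro exI[of _ 0]) auto
next
  case (insert x F)
  then obtain d c where d: "d = (\<Sum>i\<in>F. c i * f i)" and dv: "\<forall>i\<in>F. d dvd f i" by blast
  from bez obtain g where g: "gen_ideal {d, f x} = {r * g | r. True}"
    unfolding bezout_domain_def by (meson finite.emptyI finite.insertI)
  have "g \<in> gen_ideal {d, f x}" unfolding g by (auto intro: exI[of _ 1])
  then obtain \<alpha> \<beta> where gab: "g = \<alpha> * d + \<beta> * f x" using gen_ideal_pair by blast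
  have "d \<in> gen_ideal {d, f x}" by (rule gen_ideal_mem) auto
  hence gd: "g dvd d" unfolding g by auto
  have "f x \<in> gen_ideal {d, f x}" by (rule gen_ideal_mem) auto
  hence gf: "g dvd f x" unfolding g by auto
  define c' where "c' = (\<lambda>i. if i = x then \<beta> else \<alpha> * c i)"
  have "(\<Sum>i\<in>F. c' i * f i) = (\<Sum>i\<in>F. \<alpha> * c i * f i)"
    by (rule sum.cong) (use insert.hyps in \<open>auto simp: c'_def\<close>)
  hence "(\<Sum>i\<in>insert x F. c' i * f i) = \<beta> * f x + (\<Sum>i\<in>F. \<alpha> * c i * f i)"
    using insert.hyps by (simp add: c'_def)
  also have "\<dots> = g" using gab d by (simp add: sum_distrib_left mult.assoc algebra_simps)
  finally have "g = (\<Sum>i\<in>insert x F. c' i * f i)" by simp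
  moreover have "\<forall>i\<in>insert x F. g dvd f i" using gd gf dv dvd_trans by blast
  ultimately show ?case by blast
qed

lemma unimod:
  fixes H :: "'a::idom mat"
  assumes bez: "bezout_domain TYPE('a)" and H: "H \<in> carrier_mat n n" and HH: "H * H = H"
    and nz: "H \<noteq> 0\<^sub>m n n"
  shows "\<exists>u c. u \<in> carrier_mat n 1 \<and> c \<in> carrier_mat 1 n \<and> H * u = u \<and> c * u = 1\<^sub>m 1"
proof -
  obtain i0 j0 where i0: "i0 < n" and j0: "j0 < n" and hnz: "H $$ (i0,j0) \<noteq> 0"
    using nz H by (metis carrier_matD(1) carrier_matD(2) eq_matI index_zero_mat(1) index_zero_mat(2) index_zero_mat(3))
  define h where "h = (\<lambda>i. H $$ (i,j0))"
  obtain d c where d: "d = (\<Sum>i\<in>{0..<n}. c i * h i)" and dv: "\<forall>i\<in>{0..<n}. d dvd h i"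
    using bezout_comb[OF bez, of "{0..<n}" h] by auto
  define q where "q = (\<lambda>i. SOME q. h i = d * q)"
  have hq: "h i = d * q i" if "i < n" for i
    using dv that unfolding q_def dvd_def by (metis (mono_tags, lifting) atLeastLessThan_iff someI_ex zero_le)
  have dnz: "d \<noteq> 0" using hq[OF i0] hnz h_def by auto
  have "d * (\<Sum>i\<in>{0..<n}. c i * q i) = d * 1"
    using d hq by (simp add: sum_distrib_left algebra_simps)
  hence cq: "(\<Sum>i\<in>{0..<n}. c i * q i) = 1" using dnz by simp
  have Hq: "(\<Sum>k\<in>{0..<n}. H $$ (i,k) * q k) = q i" if i: "i < n" for i
  proof -
    have "d * (\<Sum>k\<in>{0..<n}. H $$ (i,k) * q k) = (\<Sum>k\<in>{0..<n}. H $$ (i,k) * h k)"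
      using hq by (simp add: sum_distrib_left algebra_simps)
    also have "\<dots> = (H * H) $$ (i,j0)" using H i j0 by (simp add: scalar_prod_def h_def)
    also have "\<dots> = d * q i" using HH hq[OF i] h_def by simp
    finally show ?thesis using dnz by simp
  qed
  define u where "u = mat n 1 (\<lambda>(i,_). q i)"
  define cc where "cc = mat 1 n (\<lambda>(_,j). c j)"
  have uc: "u \<in> carrier_mat n 1" "cc \<in> carrier_mat 1 n" by (auto simp: u_def cc_def)
  have "H * u = u" by (rule eq_matI) (use H Hq in \<open>auto simp: u_def scalar_prod_def\<close>)
  moreover have "cc * u = 1\<^sub>m 1" by (rule eq_matI) (use cq in \<open>auto simp: u_def cc_def scalar_prod_def\<close>)
  ultimately show ?thesis using uc by blast
qed

lemma free_aux:
  fixes G :: "'a::idom mat"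
  assumes bez: "bezout_domain TYPE('a)"
  shows "X \<in> carrier_mat n k \<Longrightarrow> Z \<in> carrier_mat k n \<Longrightarrow> H \<in> carrier_mat n n \<Longrightarrow>
    Z * X = 1\<^sub>m k \<Longrightarrow> H * H = H \<Longrightarrow> H * X = 0\<^sub>m n k \<Longrightarrow> Z * H = 0\<^sub>m k n \<Longrightarrow> X * Z + H = G \<Longrightarrow>
    \<exists>r X' Z'. X' \<in> carrier_mat n r \<and> Z' \<in> carrier_mat r n \<and> Z' * X' = 1\<^sub>m r \<and> X' * Z' = G"
proof (induction "n - k" arbitrary: k X Z H rule: less_induct)
  case less
  note XC = less.prems(1) and ZC = less.prems(2) and HC = less.prems(3)
  show ?case
  proof (cases "H = 0\<^sub>m n n")
    case True
    have "X * Z = G" using less.prems True XC ZC by simp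
    thus ?thesis using XC ZC less.prems(4) by blast
  next
    case False
    obtain u c where uC: "u \<in> carrier_mat n 1" and cC: "c \<in> carrier_mat 1 n" and Hu: "H * u = u"
      and cu: "c * u = 1\<^sub>m 1" using unimod[OF bez HC less.prems(5) False] by blast
    define w where "w = c * H"
    have wC: "w \<in> carrier_mat 1 n" using cC HC by (simp add: w_def)
    have wH: "w * H = w" unfolding w_def using cC HC less.prems(5) by simp
    have wu: "w * u = 1\<^sub>m 1" unfolding w_def using cC HC uC Hu cu by simp
    have Zu: "Z * u = 0\<^sub>m k 1"
    proof -
      have "Z * u = Z * (H * u)" using Hu by simp
      also have "\<dots> = (Z * H) * u" using ZC HC uC by simp
      finally show ?thesis using less.prems(7) uC by simp
    qed
    have wX: "w * X = 0\<^sub>m 1 k" unfolding w_def using cC HC XC less.prems(6) by simp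
    have uwC: "u * w \<in> carrier_mat n n" using uC wC by simp
    define H' where "H' = H - u * w"
    define X' where "X' = colcat X u"
    define Z' where "Z' = rowcat Z w"
    have X'C: "X' \<in> carrier_mat n (k+1)" unfolding X'_def using colcat_carrier[OF XC uC] by simp
    have Z'C: "Z' \<in> carrier_mat (k+1) n" unfolding Z'_def using rowcat_carrier[OF ZC wC] by simp
    have H'C: "H' \<in> carrier_mat n n" unfolding H'_def by (rule minus_carrier_mat[OF uwC])
    have Z'X': "Z' * X' = 1\<^sub>m (k+1)" unfolding Z'_def X'_def
      by (rule rowcat_colcat_one[OF XC uC ZC wC less.prems(4) Zu wX wu])
    hence "k + 1 \<le> n" using rank_le[OF Z'C X'C] by simp
    have Huw: "H * (u * w) = u * w" using HC uC wC Hu by (simp flip: assoc_mult_mat)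
    have uwH: "(u * w) * H = u * w" using HC uC wC wH by simp
    have uwuw: "(u * w) * (u * w) = u * w"
    proof -
      have "(u * w) * (u * w) = u * (w * (u * w))" by (rule assoc_mult_mat[OF uC wC uwC])
      also have "\<dots> = u * ((w * u) * w)" using uC wC by simp
      finally have "(u * w) * (u * w) = u * ((w * u) * w)" .
      thus ?thesis using wu wC by simp
    qed
    have H'H': "H' * H' = H'"
    proof -
      have "H' * H' = H * (H - u * w) - (u * w) * (H - u * w)"
        unfolding H'_def by (rule minus_mult_distrib_mat[OF HC uwC minus_carrier_mat[OF uwC]])
      also have "H * (H - u * w) = H * H - H * (u * w)" by (rule mult_minus_distrib_mat[OF HC HC uwC])
      also have "(u * w) * (H - u * w) = (u * w) * H - (u * w) * (u * w)" by (rule mult_minus_distrib_mat[OF uwC HC uwC])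
      finally have "H' * H' = H - u * w - (u * w - u * w)" using Huw uwH uwuw less.prems(5) by simp
      also have "\<dots> = H'" unfolding H'_def by (rule eq_matI) (use HC uwC uC wC in auto)
      finally show ?thesis .
    qed
    have H'X: "H' * X = 0\<^sub>m n k"
    proof -
      have "H' * X = H * X - (u * w) * X" unfolding H'_def by (rule minus_mult_distrib_mat[OF HC uwC XC])
      also have "(u * w) * X = u * (w * X)" using uC wC XC by simp
      finally show ?thesis using less.prems(6) wX uC by (auto intro!: eq_matI)
    qed
    have H'u: "H' * u = 0\<^sub>m n 1"
    proof -
      have "H' * u = H * u - (u * w) * u" unfolding H'_def by (rule minus_mult_distrib_mat[OF HC uwC uC])
      also have "(u * w) * u = u * (w * u)" using uC wC by simp
      finally show ?thesis using Hu wu uC by (auto intro!: eq_matI)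
    qed
    have ZH': "Z * H' = 0\<^sub>m k n"
    proof -
      have "Z * H' = Z * H - Z * (u * w)" unfolding H'_def by (rule mult_minus_distrib_mat[OF ZC HC uwC])
      also have "Z * (u * w) = (Z * u) * w" using uC wC ZC by simp
      finally show ?thesis using less.prems(7) Zu wC by (auto intro!: eq_matI)
    qed
    have wH': "w * H' = 0\<^sub>m 1 n"
    proof -
      have "w * H' = w * H - w * (u * w)" unfolding H'_def by (rule mult_minus_distrib_mat[OF wC HC uwC])
      also have "w * (u * w) = (w * u) * w" using uC wC by simp
      finally show ?thesis using wH wu wC by (auto intro!: eq_matI)
    qed
    have H'X': "H' * X' = 0\<^sub>m n (k+1)"
      unfolding X'_def mult_colcat[OF H'C XC uC] H'X H'u by (rule eq_matI) (auto simp: colcat_def)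
    have Z'H': "Z' * H' = 0\<^sub>m (k+1) n"
      unfolding Z'_def rowcat_mult[OF H'C ZC wC] ZH' wH' by (rule eq_matI) (auto simp: rowcat_def)
    have sum: "X' * Z' + H' = G"
    proof -
      have "X' * Z' = X * Z + u * w" unfolding X'_def Z'_def by (rule colcat_rowcat[OF XC uC ZC wC])
      hence "X' * Z' + H' = X * Z + H" unfolding H'_def
        by (intro eq_matI) (use XC ZC HC uwC uC wC in auto)
      thus ?thesis using less.prems(8) by simp
    qed
    show ?thesis
      by (rule less.hyps[of "k+1", OF _ X'C Z'C H'C Z'X' H'H' H'X' Z'H' sum]) (use \<open>k+1 \<le> n\<close> in simp)
  qed
qed

lemma free:
  fixes G :: "'a::idom mat"
  assumes bez: "bezout_domain TYPE('a)" and GC: "G \<in> carrier_mat n n" and GG: "G * G = G"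
  shows "\<exists>r X Z. X \<in> carrier_mat n r \<and> Z \<in> carrier_mat r n \<and> Z * X = 1\<^sub>m r \<and> X * Z = G"
  by (rule free_aux[OF bez, of "0\<^sub>m n 0" n 0 "0\<^sub>m 0 n" G]) (use GC GG in auto)

lemma assoc_dim[simp]:
  fixes A :: "'a::semiring_0 mat"
  assumes "dim_col A = dim_row B" "dim_col B = dim_row C"
  shows "A * B * C = A * (B * C)"
  by (rule assoc_mult_mat[of A "dim_row A" "dim_col A" B "dim_col B" C "dim_col C"]) (use assms in auto)

lemma assoc_fact:
  fixes A :: "'a::semiring_0 mat"
  assumes "A * B = C" "dim_col A = dim_row B" "dim_col B = dim_row Y"
  shows "A * (B * Y) = C * Y"
  using assms(1) assoc_dim[OF assms(2,3)] by simp

lemma zero_left: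
  fixes A :: "'a::semiring_0 mat"
  assumes "A \<in> carrier_mat a n" "G \<in> carrier_mat n n" "B \<in> carrier_mat n b" "A * G = A" "G * B = 0\<^sub>m n b"
  shows "A * B = 0\<^sub>m a b"
proof -
  have "A * B = (A * G) * B" using assms(4) by simp
  also have "\<dots> = A * (G * B)" by (rule assoc_mult_mat[OF assms(1-3)])
  finally show ?thesis using assms by simp
qed

lemma zero_right:
  fixes A :: "'a::semiring_0 mat"
  assumes "A \<in> carrier_mat a n" "G \<in> carrier_mat n n" "B \<in> carrier_mat n b" "G * B = B" "A * G = 0\<^sub>m a n"
  shows "A * B = 0\<^sub>m a b"
proof -
  have "A * B = A * (G * B)" using assms(4) by simp
  also have "\<dots> = (A * G) * B" by (rule assoc_mult_mat[OF assms(1-3), symmetric])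
  finally show ?thesis using assms by simp
qed

lemma idem_compl:
  fixes G :: "'a::comm_ring_1 mat"
  assumes GC: "G \<in> carrier_mat n n" and GG: "G * G = G"
  shows "G * (1\<^sub>m n - G) = 0\<^sub>m n n" "(1\<^sub>m n - G) * G = 0\<^sub>m n n"
    "(1\<^sub>m n - G) * (1\<^sub>m n - G) = 1\<^sub>m n - G"
proof -
  have 1: "G * (1\<^sub>m n - G) = G * 1\<^sub>m n - G * G" by (rule mult_minus_distrib_mat[OF GC]) (use GC in auto)
  show a: "G * (1\<^sub>m n - G) = 0\<^sub>m n n" unfolding 1 using GC GG by (auto intro!: eq_matI)
  have 2: "(1\<^sub>m n - G) * G = 1\<^sub>m n * G - G * G" by (rule minus_mult_distrib_mat) (use GC in auto)
  show b: "(1\<^sub>m n - G) * G = 0\<^sub>m n n" unfolding 2 using GC GG by (auto intro!: eq_matI)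
  have 3: "(1\<^sub>m n - G) * (1\<^sub>m n - G) = 1\<^sub>m n * (1\<^sub>m n - G) - G * (1\<^sub>m n - G)"
    by (rule minus_mult_distrib_mat) (use GC in auto)
  show "(1\<^sub>m n - G) * (1\<^sub>m n - G) = 1\<^sub>m n - G" unfolding 3 a using GC by (auto intro!: eq_matI)
qed

lemma free_props:
  fixes X Z :: "'a::comm_ring_1 mat"
  assumes XC: "X \<in> carrier_mat n r" and ZC: "Z \<in> carrier_mat r n" and ZX: "Z * X = 1\<^sub>m r" and XZ: "X * Z = G"
  shows "G * X = X" "Z * G = Z"
proof -
  have "G * X = X * (Z * X)" unfolding XZ[symmetric] using XC ZC by simp
  thus "G * X = X" using ZX XC by simp
  have "Z * G = (Z * X) * Z" unfolding XZ[symmetric] using XC ZC by simp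
  thus "Z * G = Z" using ZX ZC by simp
qed

lemma kernel_iso:
  fixes E F U U' :: "'a::idom mat"
  assumes bez: "bezout_domain TYPE('a)"
    and EC: "E \<in> carrier_mat n n" and FC: "F \<in> carrier_mat n n"
    and UC: "U \<in> carrier_mat n n" and U'C: "U' \<in> carrier_mat n n"
    and EE: "E * E = E" and FF: "F * F = F" and UU': "U * U' = E" and U'U: "U' * U = F"
    and UF: "U * F = U" and U'E: "U' * E = U'"
  shows "\<exists>W W'. W \<in> carrier_mat n n \<and> W' \<in> carrier_mat n n \<and> W * W' = 1\<^sub>m n - E \<and> W' * W = 1\<^sub>m n - F
    \<and> E * W = 0\<^sub>m n n \<and> W * F = 0\<^sub>m n n \<and> F * W' = 0\<^sub>m n n \<and> W' * E = 0\<^sub>m n n"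
proof -
  have E'C: "1\<^sub>m n - E \<in> carrier_mat n n" and F'C: "1\<^sub>m n - F \<in> carrier_mat n n"
    by (auto intro: minus_carrier_mat EC FC)
  note Ec = idem_compl[OF EC EE] and Fc = idem_compl[OF FC FF]
  obtain r1 XE ZE where XEC: "XE \<in> carrier_mat n r1" and ZEC: "ZE \<in> carrier_mat r1 n"
    and ZXE: "ZE * XE = 1\<^sub>m r1" and XZE: "XE * ZE = E" using free[OF bez EC EE] by blast
  obtain r2 XF ZF where XFC: "XF \<in> carrier_mat n r2" and ZFC: "ZF \<in> carrier_mat r2 n"
    and ZXF: "ZF * XF = 1\<^sub>m r2" and XZF: "XF * ZF = F" using free[OF bez FC FF] by blast
  obtain t1 XE' ZE' where XE'C: "XE' \<in> carrier_mat n t1" and ZE'C: "ZE' \<in> carrier_mat t1 n"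
    and ZXE': "ZE' * XE' = 1\<^sub>m t1" and XZE': "XE' * ZE' = 1\<^sub>m n - E" using free[OF bez E'C Ec(3)] by blast
  obtain t2 XF' ZF' where XF'C: "XF' \<in> carrier_mat n t2" and ZF'C: "ZF' \<in> carrier_mat t2 n"
    and ZXF': "ZF' * XF' = 1\<^sub>m t2" and XZF': "XF' * ZF' = 1\<^sub>m n - F" using free[OF bez F'C Fc(3)] by blast
  note pE = free_props[OF XEC ZEC ZXE XZE] and pF = free_props[OF XFC ZFC ZXF XZF]
  note pE' = free_props[OF XE'C ZE'C ZXE' XZE'] and pF' = free_props[OF XF'C ZF'C ZXF' XZF']
  have P12: "(ZE * U * XF) * (ZF * U' * XE) = 1\<^sub>m r1"
    using ZEC UC XFC ZFC U'C XEC EC FC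
    by (simp add: assoc_fact[OF XZF] assoc_fact[OF UF] assoc_fact[OF UU'] pE ZXE)
  have P21: "(ZF * U' * XE) * (ZE * U * XF) = 1\<^sub>m r2"
    using ZEC UC XFC ZFC U'C XEC EC FC
    by (simp add: assoc_fact[OF XZE] assoc_fact[OF U'E] assoc_fact[OF U'U] pF ZXF)
  have "r1 \<le> r2" by (rule rank_le[OF _ _ P12]) (use ZEC UC XFC ZFC U'C XEC in auto)
  moreover have "r2 \<le> r1" by (rule rank_le[OF _ _ P21]) (use ZEC UC XFC ZFC U'C XEC in auto)
  ultimately have r12: "r1 = r2" by simp
  have EXE': "E * XE' = 0\<^sub>m n t1"
  proof -
    have "E * XE' = E * ((1\<^sub>m n - E) * XE')" using pE' by simp
    also have "\<dots> = (E * (1\<^sub>m n - E)) * XE'" using EC XE'C E'C by simp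
    finally show ?thesis using Ec XE'C by simp
  qed
  have ZE'E: "ZE' * E = 0\<^sub>m t1 n"
  proof -
    have "ZE' * E = (ZE' * (1\<^sub>m n - E)) * E" using pE' by simp
    also have "\<dots> = ZE' * ((1\<^sub>m n - E) * E)" using EC ZE'C E'C by simp
    finally show ?thesis using Ec ZE'C by simp
  qed
  have FXF': "F * XF' = 0\<^sub>m n t2"
  proof -
    have "F * XF' = F * ((1\<^sub>m n - F) * XF')" using pF' by simp
    also have "\<dots> = (F * (1\<^sub>m n - F)) * XF'" using FC XF'C F'C by simp
    finally show ?thesis using Fc XF'C by simp
  qed
  have ZF'F: "ZF' * F = 0\<^sub>m t2 n"
  proof -
    have "ZF' * F = (ZF' * (1\<^sub>m n - F)) * F" using pF' by simp
    also have "\<dots> = ZF' * ((1\<^sub>m n - F) * F)" using FC ZF'C F'C by simp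
    finally show ?thesis using Fc ZF'C by simp
  qed
  have rankE: "r1 + t1 = n"
  proof -
    have a: "rowcat ZE ZE' * colcat XE XE' = 1\<^sub>m (r1 + t1)"
    proof (rule rowcat_colcat_one[OF XEC XE'C ZEC ZE'C ZXE _ _ ZXE'])
      show "ZE * XE' = 0\<^sub>m r1 t1" by (rule zero_left[OF ZEC EC XE'C pE(2) EXE'])
      show "ZE' * XE = 0\<^sub>m t1 r1" by (rule zero_right[OF ZE'C EC XEC pE(1) ZE'E])
    qed
    have b: "colcat XE XE' * rowcat ZE ZE' = 1\<^sub>m n"
      unfolding colcat_rowcat[OF XEC XE'C ZEC ZE'C] XZE XZE' using EC by (auto intro!: eq_matI)
    have "r1 + t1 \<le> n" by (rule rank_le[OF _ _ a]) (use XEC XE'C ZEC ZE'C in auto)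
    moreover have "n \<le> r1 + t1" by (rule rank_le[OF _ _ b]) (use XEC XE'C ZEC ZE'C in auto)
    ultimately show ?thesis by simp
  qed
  have rankF: "r2 + t2 = n"
  proof -
    have a: "rowcat ZF ZF' * colcat XF XF' = 1\<^sub>m (r2 + t2)"
    proof (rule rowcat_colcat_one[OF XFC XF'C ZFC ZF'C ZXF _ _ ZXF'])
      show "ZF * XF' = 0\<^sub>m r2 t2" by (rule zero_left[OF ZFC FC XF'C pF(2) FXF'])
      show "ZF' * XF = 0\<^sub>m t2 r2" by (rule zero_right[OF ZF'C FC XFC pF(1) ZF'F])
    qed
    have b: "colcat XF XF' * rowcat ZF ZF' = 1\<^sub>m n"
      unfolding colcat_rowcat[OF XFC XF'C ZFC ZF'C] XZF XZF' using FC by (auto intro!: eq_matI)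
    have "r2 + t2 \<le> n" by (rule rank_le[OF _ _ a]) (use XFC XF'C ZFC ZF'C in auto)
    moreover have "n \<le> r2 + t2" by (rule rank_le[OF _ _ b]) (use XFC XF'C ZFC ZF'C in auto)
    ultimately show ?thesis by simp
  qed
  have t12: "t1 = t2" using rankE rankF r12 by simp
  define W where "W = XE' * ZF'"
  define W' where "W' = XF' * ZE'"
  have WC: "W \<in> carrier_mat n n" unfolding W_def using XE'C ZF'C t12 by simp
  have W'C: "W' \<in> carrier_mat n n" unfolding W'_def using XF'C ZE'C t12 by simp
  have "W * W' = XE' * ((ZF' * XF') * ZE')" unfolding W_def W'_def using XE'C ZF'C XF'C ZE'C t12 by simp
  hence 1: "W * W' = 1\<^sub>m n - E" using ZXF' XZE' t12 ZE'C by simp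
  have "W' * W = XF' * ((ZE' * XE') * ZF')" unfolding W_def W'_def using XE'C ZF'C XF'C ZE'C t12 by simp
  hence 2: "W' * W = 1\<^sub>m n - F" using ZXE' XZF' t12 ZF'C by simp
  have ZF'C1: "ZF' \<in> carrier_mat t1 n" and XF'C1: "XF' \<in> carrier_mat n t1" using ZF'C XF'C t12 by auto
  have 3: "E * W = 0\<^sub>m n n" unfolding W_def
    using assoc_mult_mat[OF EC XE'C ZF'C1, symmetric] EXE' ZF'C1 by simp
  have 4: "W * F = 0\<^sub>m n n" unfolding W_def
    using assoc_mult_mat[OF XE'C ZF'C1 FC] ZF'F t12 XE'C by simp
  have 5: "F * W' = 0\<^sub>m n n" unfolding W'_def
    using assoc_mult_mat[OF FC XF'C1 ZE'C, symmetric] FXF' t12 ZE'C by simp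
  have 6: "W' * E = 0\<^sub>m n n" unfolding W'_def
    using assoc_mult_mat[OF XF'C1 ZE'C EC] ZE'E XF'C1 by simp
  show ?thesis using WC W'C 1 2 3 4 5 6 by blast
qed

lemma ginv_intertwine:
  fixes M N Mg Ng A :: "'a::comm_ring_1 mat"
  assumes MC: "M \<in> carrier_mat n n" and NC: "N \<in> carrier_mat n n" and MgC: "Mg \<in> carrier_mat n n"
    and NgC: "Ng \<in> carrier_mat n n" and AC: "A \<in> carrier_mat n n"
    and M1: "M * Mg = Mg * M" and M2: "Mg * M * Mg = Mg" and M3: "M * Mg * M = M"
    and N1: "N * Ng = Ng * N" and N2: "Ng * N * Ng = Ng" and N3: "N * Ng * N = N"
    and MA: "M * A = A * N"
  shows "Mg * A = A * Ng"
proof -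
  note C = MC NC MgC NgC AC
  have MA': "M * (A * X) = A * (N * X)" if "X \<in> carrier_mat n n" for X
    using assoc_mult_mat[OF MC AC that, symmetric] assoc_mult_mat[OF AC NC that] MA by simp
  have s1: "Mg * (Mg * M) = Mg"
  proof -
    have "Mg * (Mg * M) = Mg * (M * Mg)" by (simp only: M1)
    also have "\<dots> = Mg * M * Mg" using C by simp
    finally show ?thesis using M2 by simp
  qed
  have s2: "N * (Ng * N) = N" using N3 C by simp
  have s3: "N * (Ng * Ng) = Ng"
  proof -
    have "N * (Ng * Ng) = N * Ng * Ng" using C by simp
    also have "\<dots> = Ng * N * Ng" by (simp only: N1)
    finally show ?thesis using N2 by simp
  qed
  have s4: "M * (Mg * M) = M" using M3 C by simp
  have "Mg * A = (Mg * (Mg * M)) * A" using s1 by simp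
  also have "\<dots> = Mg * (Mg * (M * A))" using C by simp
  also have "\<dots> = Mg * (Mg * (A * (N * (Ng * N))))" using MA s2 by simp
  also have "\<dots> = Mg * (Mg * (M * (A * (Ng * N))))" using MA' C by simp
  also have "\<dots> = (Mg * (Mg * M)) * (A * (Ng * N))" using C by simp
  also have "\<dots> = Mg * (A * (N * Ng))" using s1 N1 by simp
  also have "\<dots> = Mg * (M * (A * Ng))" using MA' C by simp
  also have "\<dots> = (Mg * M) * (A * Ng)" using C by simp
  also have "\<dots> = (M * Mg) * (A * Ng)" by (simp only: M1)
  also have "\<dots> = M * (Mg * (A * Ng))" using C by simp
  finally have L: "Mg * A = M * (Mg * (A * Ng))" .
  have "A * Ng = A * (N * (Ng * Ng))" using s3 by simp
  also have "\<dots> = M * (A * (Ng * Ng))" using MA' C by simp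
  also have "\<dots> = (M * (Mg * M)) * (A * (Ng * Ng))" using s4 by simp
  also have "\<dots> = M * (Mg * (M * (A * (Ng * Ng))))" using C by simp
  also have "\<dots> = M * (Mg * (A * Ng))" using MA' s3 C by simp
  finally show ?thesis using L by simp
qed

theorem theorem2p1:
  fixes A B C :: "'a::idom mat" and n :: nat
  assumes "bezout_domain TYPE('a)"
    and "A \<in> carrier_mat n n" and "B \<in> carrier_mat n n" and "C \<in> carrier_mat n n"
    and "A * B * A = A * C * A"
    and "group_invertible n (A * B)" and "group_invertible n (C * A)"
  shows "similar_mat (A * B) (C * A)"
proof -
  note bez = assms(1)
  have AC: "A \<in> carrier_mat n n" and BC: "B \<in> carrier_mat n n" and CC: "C \<in> carrier_mat n n" using assms by auto
  define M where "M = A * B"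
  define N where "N = C * A"
  define Y where "Y = C * (A * B)"
  have MC: "M \<in> carrier_mat n n" and NC: "N \<in> carrier_mat n n" and YC: "Y \<in> carrier_mat n n"
    using AC BC CC by (auto simp: M_def N_def Y_def)
  obtain Mg where MgC: "Mg \<in> carrier_mat n n" and M1: "M * Mg = Mg * M" and M2: "Mg * M * Mg = Mg"
    and M3: "M * Mg * M = M" using assms(6) unfolding group_invertible_def M_def by blast
  obtain Ng where NgC: "Ng \<in> carrier_mat n n" and N1: "N * Ng = Ng * N" and N2: "Ng * N * Ng = Ng"
    and N3: "N * Ng * N = N" using assms(7) unfolding group_invertible_def N_def by blast
  have hyp: "A * (B * A) = A * (C * A)" using assms(5) AC BC CC by simp
  have hypX: "A * (B * (A * X)) = A * (C * (A * X))" if "X \<in> carrier_mat n n" for X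
  proof -
    have "A * (B * (A * X)) = (A * (B * A)) * X" using AC BC CC that by simp
    also have "\<dots> = (A * (C * A)) * X" using hyp by simp
    finally show ?thesis using AC BC CC that by simp
  qed
  have MA: "M * A = A * N" unfolding M_def N_def using hyp AC BC CC by simp
  have NY: "N * Y = Y * M" unfolding M_def N_def Y_def using hypX[OF BC] AC BC CC by simp
  have AY: "A * Y = M * M" unfolding M_def N_def Y_def using hypX[OF BC] AC BC CC by simp
  have YA: "Y * A = N * N" unfolding M_def N_def Y_def using hyp AC BC CC by simp
  have MgA: "Mg * A = A * Ng" by (rule ginv_intertwine[OF MC NC MgC NgC AC M1 M2 M3 N1 N2 N3 MA])
  have NgY: "Ng * Y = Y * Mg" by (rule ginv_intertwine[OF NC MC NgC MgC YC N1 N2 N3 M1 M2 M3 NY])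
  note Cs = AC MC NC YC MgC NgC
  (* rewrite system in right-associated normal form *)
  have c1: "M * (Mg * X) = Mg * (M * X)" if "X \<in> carrier_mat n n" for X
    using assoc_mult_mat[OF MC MgC that, symmetric] assoc_mult_mat[OF MgC MC that] M1 by simp
  have c2: "N * (Ng * X) = Ng * (N * X)" if "X \<in> carrier_mat n n" for X
    using assoc_mult_mat[OF NC NgC that, symmetric] assoc_mult_mat[OF NgC NC that] N1 by simp
  have r1': "Mg * (Mg * M) = Mg"
  proof -
    have "Mg * (Mg * M) = Mg * (M * Mg)" by (simp only: M1)
    also have "\<dots> = Mg * M * Mg" using Cs by simp
    finally show ?thesis using M2 by simp
  qed
  have r1: "Mg * (Mg * (M * X)) = Mg * X" if "X \<in> carrier_mat n n" for X
    using arg_cong[OF r1', of "\<lambda>T. T * X"] Cs that by simp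
  have r2': "Mg * (M * M) = M"
  proof -
    have "Mg * (M * M) = (Mg * M) * M" using Cs by simp
    also have "\<dots> = M * Mg * M" by (simp only: M1)
    finally show ?thesis using M3 by simp
  qed
  have r2: "Mg * (M * (M * X)) = M * X" if "X \<in> carrier_mat n n" for X
    using arg_cong[OF r2', of "\<lambda>T. T * X"] Cs that by simp
  have s1': "Ng * (Ng * N) = Ng"
  proof -
    have "Ng * (Ng * N) = Ng * (N * Ng)" by (simp only: N1)
    also have "\<dots> = Ng * N * Ng" using Cs by simp
    finally show ?thesis using N2 by simp
  qed
  have s1: "Ng * (Ng * (N * X)) = Ng * X" if "X \<in> carrier_mat n n" for X
    using arg_cong[OF s1', of "\<lambda>T. T * X"] Cs that by simp
  have s2': "Ng * (N * N) = N"
  proof -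
    have "Ng * (N * N) = (Ng * N) * N" using Cs by simp
    also have "\<dots> = N * Ng * N" by (simp only: N1)
    finally show ?thesis using N3 by simp
  qed
  have s2: "Ng * (N * (N * X)) = N * X" if "X \<in> carrier_mat n n" for X
    using arg_cong[OF s2', of "\<lambda>T. T * X"] Cs that by simp
  have a1: "M * (A * X) = A * (N * X)" if "X \<in> carrier_mat n n" for X
    using arg_cong[OF MA, of "\<lambda>T. T * X"] Cs that by simp
  have a2: "Mg * (A * X) = A * (Ng * X)" if "X \<in> carrier_mat n n" for X
    using arg_cong[OF MgA, of "\<lambda>T. T * X"] Cs that by simp
  have y1: "N * (Y * X) = Y * (M * X)" if "X \<in> carrier_mat n n" for X
    using arg_cong[OF NY, of "\<lambda>T. T * X"] Cs that by simp
  have y2: "Ng * (Y * X) = Y * (Mg * X)" if "X \<in> carrier_mat n n" for X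
    using arg_cong[OF NgY, of "\<lambda>T. T * X"] Cs that by simp
  have p1: "A * (Y * X) = M * (M * X)" if "X \<in> carrier_mat n n" for X
    using arg_cong[OF AY, of "\<lambda>T. T * X"] Cs that by simp
  have p2: "Y * (A * X) = N * (N * X)" if "X \<in> carrier_mat n n" for X
    using arg_cong[OF YA, of "\<lambda>T. T * X"] Cs that by simp
  note rules = c1 c2 M1 N1 r1 r1' r2 r2' s1 s1' s2 s2' a1 a2 MA MgA y1 y2 NY NgY p1 p2 AY YA
  define E where "E = Mg * M"
  define F where "F = Ng * N"
  define U where "U = A * F"
  define U' where "U' = Y * (Mg * Mg)"
  have EC: "E \<in> carrier_mat n n" and FC: "F \<in> carrier_mat n n" and UC: "U \<in> carrier_mat n n"
    and U'C: "U' \<in> carrier_mat n n" using Cs by (auto simp: E_def F_def U_def U'_def)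
  have EE: "E * E = E" unfolding E_def using Cs by (simp add: rules)
  have FF: "F * F = F" unfolding F_def using Cs by (simp add: rules)
  have UU': "U * U' = E" unfolding U_def U'_def E_def F_def using Cs by (simp add: rules)
  have U'U: "U' * U = F" unfolding U_def U'_def E_def F_def using Cs by (simp add: rules)
  have UF: "U * F = U" unfolding U_def U'_def E_def F_def using Cs by (simp add: rules)
  have U'E: "U' * E = U'" unfolding U_def U'_def E_def F_def using Cs by (simp add: rules)
  have FU': "F * U' = U'" unfolding U_def U'_def E_def F_def using Cs by (simp add: rules)
  have EU: "E * U = U" unfolding U_def U'_def E_def F_def using Cs by (simp add: rules)
  have ME: "M * E = M" unfolding E_def using Cs by (simp add: rules)
  have FN: "F * N = N" unfolding F_def using Cs by (simp add: rules)
  have MU: "M * U = U * N" unfolding U_def F_def using Cs by (simp add: rules)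
  obtain W W' where WC: "W \<in> carrier_mat n n" and W'C: "W' \<in> carrier_mat n n"
    and WW': "W * W' = 1\<^sub>m n - E" and W'W: "W' * W = 1\<^sub>m n - F"
    and EW: "E * W = 0\<^sub>m n n" and WF: "W * F = 0\<^sub>m n n" and FW': "F * W' = 0\<^sub>m n n" and W'E: "W' * E = 0\<^sub>m n n"
    using kernel_iso[OF bez EC FC UC U'C EE FF UU' U'U UF U'E] by blast
  have UW': "U * W' = 0\<^sub>m n n"
    using assoc_mult_mat[OF UC FC W'C] UF FW' UC by simp
  have WU': "W * U' = 0\<^sub>m n n"
    using assoc_mult_mat[OF WC FC U'C] FU' WF U'C by simp
  have W'U: "W' * U = 0\<^sub>m n n"
    using assoc_mult_mat[OF W'C EC UC] EU W'E UC by simp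
  have U'W: "U' * W = 0\<^sub>m n n"
    using assoc_mult_mat[OF U'C EC WC] U'E EW U'C by simp
  have MW: "M * W = 0\<^sub>m n n"
    using assoc_mult_mat[OF MC EC WC] ME EW MC by simp
  have WN: "W * N = 0\<^sub>m n n"
    using assoc_mult_mat[OF WC FC NC] FN WF NC by simp
  define P where "P = U + W"
  define Q where "Q = U' + W'"
  have PC: "P \<in> carrier_mat n n" and QC: "Q \<in> carrier_mat n n"
    using UC WC U'C W'C by (auto simp: P_def Q_def)
  have PQ: "P * Q = 1\<^sub>m n"
  proof -
    have "P * Q = (U * U' + W * U') + (U * W' + W * W')"
      unfolding P_def Q_def using UC WC U'C W'C
      by (simp add: add_mult_distrib_mat[of _ n n] mult_add_distrib_mat[of _ n n])
    also have "\<dots> = 1\<^sub>m n" unfolding UU' UW' WU' WW' using EC by (auto intro!: eq_matI)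
    finally show ?thesis .
  qed
  have QP: "Q * P = 1\<^sub>m n"
  proof -
    have "Q * P = (U' * U + W' * U) + (U' * W + W' * W)"
      unfolding P_def Q_def using UC WC U'C W'C
      by (simp add: add_mult_distrib_mat[of _ n n] mult_add_distrib_mat[of _ n n])
    also have "\<dots> = 1\<^sub>m n" unfolding U'U U'W W'U W'W using FC by (auto intro!: eq_matI)
    finally show ?thesis .
  qed
  have MP: "M * P = P * N"
  proof -
    have "M * P = M * U + M * W" unfolding P_def using MC UC WC by (simp add: mult_add_distrib_mat[of _ n n])
    moreover have "P * N = U * N + W * N" unfolding P_def using NC UC WC by (simp add: add_mult_distrib_mat[of _ n n])
    ultimately show ?thesis using MU MW WN UC NC by simp
  qed
  have "M = P * N * Q"
  proof -
    have "M = M * (P * Q)" using PQ MC by simp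
    also have "\<dots> = (M * P) * Q" using MC PC QC by simp
    finally show ?thesis using MP by simp
  qed
  hence "similar_mat_wit M N P Q" unfolding similar_mat_wit_def Let_def using MC NC PC QC PQ QP by auto
  thus ?thesis unfolding similar_mat_def M_def N_def by blast
qed

end
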